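(* Let $n,t\ge1$ and $b\ge1$. Then \[ N_{2,b}^+(n,t)=2^{b}\,I_{2,b}(n,t-1)=2^{t(b-1)+1}\sum_{i=0}^{t-1}\binom{n+t-1}{i}. \]
   Context: $\Sigma_2=\{0,1\}$. A $b$-burst-insertion at position $i\in[1,n+1]$ transforms $x_1\cdots x_n$ into $x_1\cdots x_{i-1}y_1\cdots y_b x_i\cdots x_n$ for arbitrary $y_1\cdots y_b\in\Sigma_2^b$. $\mathcal{I}_{t,b}(\boldsymbol{x})$ is the set of all length-$(n+tb)$ sequences obtainable from $\boldsymbol{x}$ by $t$ successive $b$-burst-insertions ($\mathcal{I}_{0,b}(\boldsymbol{x})=\{\boldsymbol{x}\}$). $I_{2,b}(n,t)=\max\{|\mathcal{I}_{t,b}(\boldsymbol{x})|:\boldsymbol{x}\in\Sigma_2^n\}$ and $N_{2,b}^+(n,t)=\max\{|\mathcal{I}_{t,b}(\boldsymbol{x})\cap\mathcal{I}_{t,b}(\boldsymbol{y})|:\boldsymbol{x}\ne\boldsymbol{y}\in\Sigma_2^n\}$. Convention: $\binom{m}{i}=0$ if $m<i$. *)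

theory Defs
  imports Main
begin

definition burst_ins :: "nat \<Rightarrow> bool list \<Rightarrow> bool list set" where
  "burst_ins b x = {take (i - 1) x @ y @ drop (i - 1) x | i y.
                      1 \<le> i \<and> i \<le> length x + 1 \<and> length y = b}"

fun I_set :: "nat \<Rightarrow> nat \<Rightarrow> bool list \<Rightarrow> bool list set" where
  "I_set 0 b x = {x}"
| "I_set (Suc t) b x = (\<Union>z \<in> I_set t b x. burst_ins b z)"

definition I2 :: "nat \<Rightarrow> nat \<Rightarrow> nat \<Rightarrow> nat" where
  "I2 b n t = Max {card (I_set t b x) | x. length x = n}"

definition N2plus :: "nat \<Rightarrow> nat \<Rightarrow> nat \<Rightarrow> nat" where
  "N2plus b n t = Max {card (I_set t b x \<inter> I_set t b y) | x y.
                         length x = n \<and> length y = n \<and> x \<noteq> y}"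

end

theory Submission
  imports Defs
begin


fun Q :: "nat \<Rightarrow> nat \<Rightarrow> bool list \<Rightarrow> bool list \<Rightarrow> bool" where
  "Q b t [] z = (length z = t*b)"
| "Q b t (a#x) z = (\<exists>g z' k. z = g @ a # z' \<and> length g = k*b \<and> k \<le> t \<and> Q b (t-k) x z')"

lemma Q_len: "Q b t x z \<Longrightarrow> length z = length x + t*b"
proof (induction x arbitrary: t z)
  case Nil then show ?case by simp
next
  case (Cons a x)
  then obtain g z' k where h: "z = g @ a # z'" "length g = k*b" "k \<le> t" "Q b (t-k) x z'" by auto
  have "length z' = length x + (t-k)*b" using Cons.IH h(4) by blast
  moreover have "(t-k)*b + k*b = t*b" using h(3) by (metis add_mult_distrib le_add_diff_inverse2)
  ultimately show ?case using h by simp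
qed

lemma Q_pad: "Q b s x w \<Longrightarrow> length h = k*b \<Longrightarrow> Q b (s+k) x (h@w)"
proof (cases x)
  case Nil
  assume "Q b s x w" "length h = k*b"
  then show ?thesis using Nil by (simp add: add_mult_distrib)
next
  case (Cons a x')
  assume q: "Q b s x w" and l: "length h = k*b"
  then obtain g z' k2 where h: "w = g @ a # z'" "length g = k2*b" "k2 \<le> s" "Q b (s-k2) x' z'"
    using Cons by auto
  have "h @ w = (h@g) @ a # z'" using h by simp
  moreover have "length (h@g) = (k+k2)*b" using h l by (simp add: add_mult_distrib)
  moreover have "k+k2 \<le> s+k" using h by simp
  moreover have "s + k - (k+k2) = s - k2" by simp
  ultimately show ?thesis using Cons h(4) by (metis Q.simps(2))
qed

lemma Q0: "Q b 0 x z \<longleftrightarrow> z = x"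
proof (induction x arbitrary: z)
  case Nil then show ?case by simp
next
  case (Cons a x)
  show ?case
  proof
    assume "Q b 0 (a#x) z"
    then obtain g z' k where h: "z = g @ a # z'" "length g = k*b" "k \<le> 0" "Q b (0-k) x z'" by auto
    then show "z = a#x" using Cons.IH by simp
  next
    assume "z = a#x"
    then show "Q b 0 (a#x) z" using Cons.IH by (metis Q.simps(2) append_Nil diff_zero le_refl list.size(3) mult_0)
  qed
qed

lemma burst_ins_alt: "burst_ins b z = {u@y@v | u y v. z = u@v \<and> length y = b}"
proof
  show "burst_ins b z \<subseteq> {u@y@v | u y v. z = u@v \<and> length y = b}"
  proof
    fix w assume "w \<in> burst_ins b z"
    then obtain i y where h: "w = take (i - 1) z @ y @ drop (i - 1) z" "length y = b"
      unfolding burst_ins_def by blast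
    show "w \<in> {u@y@v | u y v. z = u@v \<and> length y = b}"
      using h by (intro CollectI exI[of _ "take (i - 1) z"] exI[of _ y] exI[of _ "drop (i - 1) z"]) simp
  qed
next
  show "{u@y@v | u y v. z = u@v \<and> length y = b} \<subseteq> burst_ins b z"
  proof
    fix w assume "w \<in> {u@y@v | u y v. z = u@v \<and> length y = b}"
    then obtain u y v where h: "w = u@y@v" "z = u@v" "length y = b" by blast
    show "w \<in> burst_ins b z" unfolding burst_ins_def
      by (rule CollectI, rule exI[of _ "length u + 1"], rule exI[of _ y]) (use h in simp)
  qed
qed

lemma Q_up: "Q b t x z \<Longrightarrow> z = u@v \<Longrightarrow> length y = b \<Longrightarrow> Q b (Suc t) x (u@y@v)"
proof (induction x arbitrary: t z u v)
  case Nil then show ?case by simp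
next
  case (Cons a x)
  then obtain g z' k where h: "z = g @ a # z'" "length g = k*b" "k \<le> t" "Q b (t-k) x z'" by auto
  from h(1) Cons.prems(2) have "u @ v = g @ a # z'" by simp
  then obtain us where "u = g @ us \<and> us @ v = a # z' \<or> u @ us = g \<and> v = us @ a # z'"
    unfolding append_eq_append_conv2 by blast
  then show ?case
  proof
    assume "u = g @ us \<and> us @ v = a # z'"
    then show ?thesis
    proof (cases us)
      case Nil
      with \<open>u = g @ us \<and> us @ v = a # z'\<close> have "u = g" "v = a#z'" by auto
      have "u@y@v = (u@y) @ a # z'" using \<open>v = a#z'\<close> by simp
      moreover have "length (u@y) = (k+1)*b" using \<open>u=g\<close> h Cons.prems by simp
      moreover have "k+1 \<le> Suc t" "Suc t - (k+1) = t - k" using h by auto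
      ultimately show ?thesis using h(4) by (metis Q.simps(2))
    next
      case (Cons c us')
      with \<open>u = g @ us \<and> us @ v = a # z'\<close> have "c = a" "z' = us' @ v" "u = g @ a # us'" by auto
      have "Q b (Suc (t-k)) x (us'@y@v)" using Cons.IH[OF h(4) \<open>z' = us' @ v\<close> Cons.prems(3)] .
      moreover have "Suc t - k = Suc (t-k)" using h by simp
      moreover have "u@y@v = g @ a # (us'@y@v)" using \<open>u = g @ a # us'\<close> by simp
      ultimately show ?thesis using h by (metis Q.simps(2) le_SucI)
    qed
  next
    assume hh: "u @ us = g \<and> v = us @ a # z'"
    have "u@y@v = (u@y@us) @ a # z'" using hh by simp
    moreover have "length (u@y@us) = (k+1)*b" using hh h Cons.prems by auto
    moreover have "k+1 \<le> Suc t" "Suc t - (k+1) = t - k" using h by auto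
    ultimately show ?thesis using h(4) by (metis Q.simps(2))
  qed
qed

lemma Q_down: "Q b (Suc t) x w \<Longrightarrow> \<exists>u y v. w = u@y@v \<and> length y = b \<and> Q b t x (u@v)"
proof (induction x arbitrary: t w)
  case Nil
  then have "length w = b + t*b" by simp
  then show ?case by (intro exI[of _ "[]"] exI[of _ "take b w"] exI[of _ "drop b w"]) simp
next
  case (Cons a x)
  then obtain g z' k where h: "w = g @ a # z'" "length g = k*b" "k \<le> Suc t" "Q b (Suc t-k) x z'" by auto
  show ?case
  proof (cases k)
    case 0
    then have "g = []" using h by simp
    from h(4) 0 have "Q b (Suc t) x z'" by simp
    from Cons.IH[OF this] obtain u y v where uv: "z' = u@y@v" "length y = b" "Q b t x (u@v)" by blast
    have "Q b t (a#x) (a#u@v)" using uv(3) by (metis Q.simps(2) append_Nil diff_zero le0 list.size(3) mult_0)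
    then show ?thesis using uv h \<open>g=[]\<close> by (intro exI[of _ "a#u"] exI[of _ y] exI[of _ v]) simp
  next
    case (Suc k')
    have lg: "length g = b + k'*b" using h Suc by simp
    have "w = [] @ take b g @ (drop b g @ a # z')" using h by simp
    moreover have "length (take b g) = b" using lg by simp
    moreover have "Q b t (a#x) (drop b g @ a # z')"
    proof -
      have "length (drop b g) = k'*b" using lg by simp
      moreover have "k' \<le> t" "t - k' = Suc t - k" using h Suc by auto
      ultimately show ?thesis using h(4) by (metis Q.simps(2))
    qed
    ultimately show ?thesis by (metis append_Nil)
  qed
qed

lemma I_set_Q: "I_set t b x = {z. Q b t x z}"
proof (induction t)
  case 0 then show ?case by (simp add: Q0)
next
  case (Suc t)
  show ?case
  proof (rule set_eqI)
    fix w
    show "w \<in> I_set (Suc t) b x \<longleftrightarrow> w \<in> {z. Q b (Suc t) x z}"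
    proof
      assume "w \<in> I_set (Suc t) b x"
      then obtain z where "Q b t x z" "w \<in> burst_ins b z" using Suc by auto
      then obtain u y v where "w = u@y@v" "z = u@v" "length y = b" unfolding burst_ins_alt by blast
      then show "w \<in> {z. Q b (Suc t) x z}" using Q_up \<open>Q b t x z\<close> by blast
    next
      assume "w \<in> {z. Q b (Suc t) x z}"
      then obtain u y v where "w = u@y@v" "length y = b" "Q b t x (u@v)" using Q_down by blast
      then have "w \<in> burst_ins b (u@v)" unfolding burst_ins_alt by blast
      then show "w \<in> I_set (Suc t) b x" using Suc \<open>Q b t x (u@v)\<close> by auto
    qed
  qed
qed



lemma Q_Nil2: "\<not> Q b t (a#x) []" by auto

lemma Q_rec:
  assumes b: "b \<ge> 1"
  shows "Q b t (a#x) (d#z) \<longleftrightarrow> (d = a \<and> Q b t x z) \<or>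
     (d \<noteq> a \<and> 1 \<le> t \<and> b-1 \<le> length z \<and> Q b (t-1) (a#x) (drop (b-1) z))"
proof
  assume "Q b t (a#x) (d#z)"
  then obtain g z' k where h: "d#z = g @ a # z'" "length g = k*b" "k \<le> t" "Q b (t-k) x z'" by auto
  show "(d = a \<and> Q b t x z) \<or>
     (d \<noteq> a \<and> 1 \<le> t \<and> b-1 \<le> length z \<and> Q b (t-1) (a#x) (drop (b-1) z))"
  proof (cases g)
    case Nil
    then have "k = 0" using h b by simp
    then show ?thesis using h Nil by simp
  next
    case (Cons d' g')
    then have dg: "d = d'" "z = g' @ a # z'" using h by auto
    have k1: "k \<ge> 1" using h Cons b by (cases k) auto
    have lg': "length g' = k*b - 1" using h Cons by simp
    show ?thesis
    proof (cases "d = a")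
      case True
      have "Q b (t-k+k) x ((g'@[a]) @ z')"
        by (rule Q_pad[OF h(4)]) (use lg' k1 b in \<open>simp add: Suc_leI\<close>)
      then have "Q b t x z" using dg h(3) by simp
      then show ?thesis using True by simp
    next
      case False
      have kb: "b \<le> k*b" using mult_le_mono1[OF k1, of b] by simp
      have lb: "b-1 \<le> length g'" using lg' diff_le_mono[OF kb, of 1] by simp
      then have dz: "drop (b-1) z = drop (b-1) g' @ a # z'" using dg by simp
      have "length (drop (b-1) g') = (k-1)*b" using lg' kb b by (simp add: diff_mult_distrib)
      moreover have "k-1 \<le> t-1" "t - 1 - (k-1) = t - k" using h k1 by auto
      ultimately have "Q b (t-1) (a#x) (drop (b-1) z)" using dz h(4) by (metis Q.simps(2))
      moreover have "b - 1 \<le> length z" using dg lb by simp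
      ultimately show ?thesis using False k1 h(3) by simp
    qed
  qed
next
  assume "(d = a \<and> Q b t x z) \<or>
     (d \<noteq> a \<and> 1 \<le> t \<and> b-1 \<le> length z \<and> Q b (t-1) (a#x) (drop (b-1) z))"
  then show "Q b t (a#x) (d#z)"
  proof
    assume hh: "d = a \<and> Q b t x z"
    show ?thesis unfolding Q.simps(2)
      by (rule exI[of _ "[]"], rule exI[of _ z], rule exI[of _ 0]) (use hh in simp)
  next
    assume hh: "d \<noteq> a \<and> 1 \<le> t \<and> b-1 \<le> length z \<and> Q b (t-1) (a#x) (drop (b-1) z)"
    then obtain g z' k where h: "drop (b-1) z = g @ a # z'" "length g = k*b" "k \<le> t-1" "Q b (t-1-k) x z'"
      by auto
    have "z = take (b-1) z @ g @ a # z'" using append_take_drop_id[of "b-1" z] h(1) by (simp del: append_take_drop_id)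
    then have e: "d#z = (d # take (b-1) z @ g) @ a # z'" by simp
    have l: "length (d # take (b-1) z @ g) = (k+1)*b" using h hh b by simp
    have k: "k+1 \<le> t" "t - (k+1) = t-1-k" using h hh by auto
    show ?thesis unfolding Q.simps(2)
      by (rule exI[of _ "d # take (b-1) z @ g"], rule exI[of _ z'], rule exI[of _ "k+1"]) (use e l k h(4) in simp)
  qed
qed

definition S :: "nat \<Rightarrow> nat \<Rightarrow> bool list \<Rightarrow> bool list set" where
  "S b t x = {z. Q b t x z}"

lemma S_sub: "S b t x \<subseteq> {z. length z = length x + t*b}"
  unfolding S_def using Q_len by blast

lemma finite_len: "finite {z::bool list. length z = n}"
  using finite_lists_length_eq[of "UNIV::bool set" n] by simp

lemma card_len: "card {z::bool list. length z = n} = 2^n"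
  using card_lists_length_eq[of "UNIV::bool set" n] by simp

lemma finite_S: "finite (S b t x)"
  using finite_subset[OF S_sub finite_len] .

definition P :: "nat \<Rightarrow> bool list set \<Rightarrow> bool list set" where
  "P m A = {z. m \<le> length z \<and> drop m z \<in> A}"

lemma P_eq: "P m A = (\<lambda>(u,v). u@v) ` ({u. length u = m} \<times> A)"
proof (rule set_eqI)
  fix z show "z \<in> P m A \<longleftrightarrow> z \<in> (\<lambda>(u,v). u@v) ` ({u. length u = m} \<times> A)"
  proof
    assume "z \<in> P m A"
    then have "z = (\<lambda>(u,v). u@v) (take m z, drop m z)" "(take m z, drop m z) \<in> {u. length u = m} \<times> A"
      unfolding P_def by auto
    then show "z \<in> (\<lambda>(u,v). u@v) ` ({u. length u = m} \<times> A)" by blast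
  qed (auto simp: P_def)
qed

lemma card_P: "finite (A :: bool list set) \<Longrightarrow> card (P m A) = 2^m * card A"
proof -
  assume fA: "finite A"
  have "inj_on (\<lambda>(u,v). u@v) ({u::bool list. length u = m} \<times> A)"
    by (auto simp: inj_on_def)
  then have "card (P m A) = card ({u::bool list. length u = m} \<times> A)"
    unfolding P_eq by (rule card_image)
  also have "\<dots> = 2^m * card A" by (simp add: card_cartesian_product card_len)
  finally show ?thesis .
qed

lemma finite_P: "finite (A :: bool list set) \<Longrightarrow> finite (P m A)"
  unfolding P_eq using finite_len by auto

lemma S_decomp:
  assumes b: "b \<ge> 1"
  shows "S b t (a#x) = Cons a ` S b t x \<union> (if 1 \<le> t then Cons (\<not>a) ` P (b-1) (S b (t-1) (a#x)) else {})"
proof (rule set_eqI)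
  fix z
  show "z \<in> S b t (a#x) \<longleftrightarrow> z \<in> Cons a ` S b t x \<union> (if 1 \<le> t then Cons (\<not>a) ` P (b-1) (S b (t-1) (a#x)) else {})"
  proof (cases z)
    case Nil then show ?thesis by (auto simp: S_def)
  next
    case (Cons d z')
    have A: "d#z' \<in> Cons c ` X \<longleftrightarrow> d = c \<and> z' \<in> X" for c X by auto
    have B: "w \<in> S b s y \<longleftrightarrow> Q b s y w" for w s y unfolding S_def by simp
    have C: "w \<in> P m X \<longleftrightarrow> m \<le> length w \<and> drop m w \<in> X" for w m X unfolding P_def by simp
    have D: "d \<noteq> a \<longleftrightarrow> d = (\<not>a)" by auto
    show ?thesis
    proof (cases "1 \<le> t")
      case True
      show ?thesis unfolding Cons using True
        by (simp only: Q_rec[OF b] A B C Un_iff D if_True simp_thms)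
    next
      case False
      show ?thesis unfolding Cons using False
        by (simp only: Q_rec[OF b] A B C Un_iff if_False empty_iff simp_thms)
    qed
  qed
qed

definition F :: "nat \<Rightarrow> nat \<Rightarrow> nat \<Rightarrow> nat" where
  "F b n t = 2^(t*(b-1)) * (\<Sum>i\<le>t. (n+t) choose i)"

lemma Ssum_rec: "(\<Sum>i\<le>Suc s. (Suc n + Suc s) choose i) =
   (\<Sum>i\<le>Suc s. (n + Suc s) choose i) + (\<Sum>i\<le>s. (Suc n + s) choose i)"
proof -
  define m where "m = n + Suc s"
  have e1: "Suc n + Suc s = Suc m" "Suc n + s = m" unfolding m_def by simp_all
  have "(\<Sum>i\<le>Suc s. Suc m choose i) = 1 + (\<Sum>i\<le>s. Suc m choose Suc i)"
    by (simp only: sum.atMost_Suc_shift binomial_n_0)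
  also have "(\<Sum>i\<le>s. Suc m choose Suc i) = (\<Sum>i\<le>s. m choose Suc i) + (\<Sum>i\<le>s. m choose i)"
    by (simp only: binomial_Suc_Suc sum.distrib add.commute)
  also have "1 + ((\<Sum>i\<le>s. m choose Suc i) + (\<Sum>i\<le>s. m choose i)) = (1 + (\<Sum>i\<le>s. m choose Suc i)) + (\<Sum>i\<le>s. m choose i)"
    by simp
  also have "1 + (\<Sum>i\<le>s. m choose Suc i) = (\<Sum>i\<le>Suc s. m choose i)"
    by (simp only: sum.atMost_Suc_shift binomial_n_0)
  finally show ?thesis using e1 m_def by simp
qed

lemma F_rec: "b \<ge> 1 \<Longrightarrow> F b (Suc n) (Suc s) = F b n (Suc s) + 2^(b-1) * F b (Suc n) s"
proof -
  assume b: "b \<ge> 1"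
  have "F b (Suc n) (Suc s) = 2^(Suc s*(b-1)) * ((\<Sum>i\<le>Suc s. (n + Suc s) choose i) + (\<Sum>i\<le>s. (Suc n + s) choose i))"
    unfolding F_def using Ssum_rec by simp
  also have "\<dots> = F b n (Suc s) + 2^(b-1) * 2^(s*(b-1)) * (\<Sum>i\<le>s. (Suc n + s) choose i)"
  proof -
    have "2^(Suc s*(b-1)) = (2::nat)^(b-1) * 2^(s*(b-1))"
      by (simp add: power_add[symmetric])
    then show ?thesis unfolding F_def by (simp add: algebra_simps)
  qed
  also have "\<dots> = F b n (Suc s) + 2^(b-1) * F b (Suc n) s"
    unfolding F_def by simp
  finally show ?thesis .
qed

lemma F_0t: "b \<ge> 1 \<Longrightarrow> F b 0 t = 2^(t*b)"
proof -
  assume b: "b \<ge> 1"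
  have "F b 0 t = 2^(t*(b-1)) * 2^t" unfolding F_def using choose_row_sum[of t] by simp
  also have "\<dots> = 2^(t*(b-1) + t)" by (simp add: power_add)
  also have "t*(b-1) + t = t*b" using b by (cases b) auto
  finally show ?thesis .
qed

lemma F_n0: "F b n 0 = 1" unfolding F_def by simp

lemma card_S: "b \<ge> 1 \<Longrightarrow> card (S b t x) = F b (length x) t"
proof (induction x arbitrary: t)
  case Nil
  have "S b t [] = {z. length z = t*b}" unfolding S_def by auto
  then show ?case using card_len F_0t[OF Nil] by (simp add: mult.commute)
next
  case (Cons a x)
  show ?case
  proof (induction t)
    case 0
    have "S b 0 (a#x) = {a#x}" unfolding S_def by (auto simp del: Q.simps simp add: Q0)
    then show ?case by (simp add: F_n0)
  next
    case (Suc s)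
    have dec: "S b (Suc s) (a#x) = Cons a ` S b (Suc s) x \<union> Cons (\<not>a) ` P (b-1) (S b s (a#x))"
      using S_decomp[OF Cons.prems, of "Suc s" a x] by simp
    have "card (S b (Suc s) (a#x)) = card (Cons a ` S b (Suc s) x) + card (Cons (\<not>a) ` P (b-1) (S b s (a#x)))"
      unfolding dec by (rule card_Un_disjoint) (auto intro: finite_S finite_P)
    also have "\<dots> = card (S b (Suc s) x) + card (P (b-1) (S b s (a#x)))"
      by (simp add: card_image)
    also have "\<dots> = F b (length x) (Suc s) + 2^(b-1) * F b (Suc (length x)) s"
      using Cons.IH[OF Cons.prems] Suc.IH card_P[OF finite_S] by simp
    also have "\<dots> = F b (length (a#x)) (Suc s)" using F_rec[OF Cons.prems] by simp
    finally show ?case .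
  qed
qed



lemma S_mem: "z \<in> S b t x \<longleftrightarrow> Q b t x z" unfolding S_def by simp

lemma S0: "S b 0 x = {x}" unfolding S_def by (auto simp del: Q.simps simp add: Q0)

lemma P_int: "P m A \<inter> P m B = P m (A \<inter> B)" by (auto simp: P_def)

lemma absorb:
  assumes b: "b \<ge> 1" and h: "length h = b-1" and q: "Q b s (c#w) u"
  shows "Q b (Suc s) w (h@u)"
proof -
  from q obtain g u' k where hh: "u = g @ c # u'" "length g = k*b" "k \<le> s" "Q b (s-k) w u'" by auto
  have "Q b (s-k + (k+1)) w ((h@g@[c]) @ u')"
    by (rule Q_pad[OF hh(4)]) (use h hh b in simp)
  moreover have "s-k + (k+1) = Suc s" using hh by simp
  ultimately show ?thesis using hh by simp
qed

lemma T_same: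
  assumes b: "b \<ge> 1"
  shows "card (S b (Suc s) (a#x) \<inter> S b (Suc s) (a#y)) =
     card (S b (Suc s) x \<inter> S b (Suc s) y) + 2^(b-1) * card (S b s (a#x) \<inter> S b s (a#y))"
proof -
  have e: "S b (Suc s) (a#x) \<inter> S b (Suc s) (a#y) =
     Cons a ` (S b (Suc s) x \<inter> S b (Suc s) y) \<union> Cons (\<not>a) ` P (b-1) (S b s (a#x) \<inter> S b s (a#y))"
    unfolding S_decomp[OF b, of "Suc s" a x] S_decomp[OF b, of "Suc s" a y] P_int[symmetric] by auto
  show ?thesis unfolding e
    by (subst card_Un_disjoint) (auto simp: card_image card_P finite_S finite_P)
qed

lemma T_diff_sub:
  assumes b: "b \<ge> 1" and ac: "a \<noteq> c"
  shows "S b (Suc s) (a#x) \<inter> S b (Suc s) (c#y) \<subseteq>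
     Cons a ` P (b-1) (S b s (c#y)) \<union> Cons c ` P (b-1) (S b s (a#x))"
proof -
  have cc: "c = (\<not>a)" using ac by auto
  show ?thesis
    unfolding cc S_decomp[OF b, of "Suc s" a x] S_decomp[OF b, of "Suc s" "\<not>a" y] by auto
qed

lemma T_diff_card:
  assumes b: "b \<ge> 1" and ac: "a \<noteq> c" and l: "length x = length y"
  shows "card (S b (Suc s) (a#x) \<inter> S b (Suc s) (c#y)) \<le> 2^b * F b (Suc (length x)) s"
proof -
  have "card (S b (Suc s) (a#x) \<inter> S b (Suc s) (c#y)) \<le>
     card (Cons a ` P (b-1) (S b s (c#y)) \<union> Cons c ` P (b-1) (S b s (a#x)))"
    by (rule card_mono[OF _ T_diff_sub[OF b ac]]) (auto intro: finite_P finite_S)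
  also have "\<dots> \<le> card (Cons a ` P (b-1) (S b s (c#y))) + card (Cons c ` P (b-1) (S b s (a#x)))"
    by (rule card_Un_le)
  also have "\<dots> = 2^(b-1) * F b (Suc (length x)) s + 2^(b-1) * F b (Suc (length x)) s"
    by (simp add: card_image card_P finite_S card_S[OF b] l)
  also have "\<dots> = 2^b * F b (Suc (length x)) s"
  proof -
    have "(2::nat)^b = 2 * 2^(b-1)" using b by (cases b) auto
    then show ?thesis by simp
  qed
  finally show ?thesis .
qed

lemma T_diff_eq:
  assumes b: "b \<ge> 1" and ac: "a \<noteq> c"
  shows "card (S b (Suc s) (a#w) \<inter> S b (Suc s) (c#w)) = 2^b * F b (Suc (length w)) s"
proof -
  have cc: "c = (\<not>a)" using ac by auto
  have sup: "Cons a ` P (b-1) (S b s (c#w)) \<union> Cons c ` P (b-1) (S b s (a#w)) \<subseteq>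
     S b (Suc s) (a#w) \<inter> S b (Suc s) (c#w)"
  proof
    fix z assume "z \<in> Cons a ` P (b-1) (S b s (c#w)) \<union> Cons c ` P (b-1) (S b s (a#w))"
    then show "z \<in> S b (Suc s) (a#w) \<inter> S b (Suc s) (c#w)"
    proof
      assume "z \<in> Cons a ` P (b-1) (S b s (c#w))"
      then obtain z' where z: "z = a#z'" "b-1 \<le> length z'" "Q b s (c#w) (drop (b-1) z')"
        unfolding P_def S_mem by auto
      have "Q b (Suc s) w (take (b-1) z' @ drop (b-1) z')"
        by (rule absorb[OF b _ z(3)]) (use z in simp)
      then have "Q b (Suc s) w z'" by simp
      then have "Q b (Suc s) (a#w) z" using Q_rec[OF b] z by simp
      moreover have "Q b (Suc s) (c#w) z" using Q_rec[OF b] z ac by simp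
      ultimately show ?thesis by (simp add: S_mem)
    next
      assume "z \<in> Cons c ` P (b-1) (S b s (a#w))"
      then obtain z' where z: "z = c#z'" "b-1 \<le> length z'" "Q b s (a#w) (drop (b-1) z')"
        unfolding P_def S_mem by auto
      have "Q b (Suc s) w (take (b-1) z' @ drop (b-1) z')"
        by (rule absorb[OF b _ z(3)]) (use z in simp)
      then have "Q b (Suc s) w z'" by simp
      then have "Q b (Suc s) (c#w) z" using Q_rec[OF b] z by simp
      moreover have "Q b (Suc s) (a#w) z" using Q_rec[OF b] z ac by simp
      ultimately show ?thesis by (simp add: S_mem)
    qed
  qed
  have e: "S b (Suc s) (a#w) \<inter> S b (Suc s) (c#w) =
     Cons a ` P (b-1) (S b s (c#w)) \<union> Cons c ` P (b-1) (S b s (a#w))"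
    using sup T_diff_sub[OF b ac] by blast
  have "card (Cons a ` P (b-1) (S b s (c#w)) \<union> Cons c ` P (b-1) (S b s (a#w))) =
     2^(b-1) * F b (Suc (length w)) s + 2^(b-1) * F b (Suc (length w)) s"
    by (subst card_Un_disjoint) (use ac in \<open>auto simp: card_image card_P finite_S finite_P card_S[OF b]\<close>)
  also have "\<dots> = 2^b * F b (Suc (length w)) s"
  proof -
    have "(2::nat)^b = 2 * 2^(b-1)" using b by (cases b) auto
    then show ?thesis by simp
  qed
  finally show ?thesis unfolding e .
qed

lemma T_bound:
  assumes b: "b \<ge> 1"
  shows "length x = length y \<Longrightarrow> x \<noteq> y \<Longrightarrow>
     card (S b (Suc s) x \<inter> S b (Suc s) y) \<le> 2^b * F b (length x) s"
proof (induction x arbitrary: y s)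
  case Nil then show ?case by simp
next
  case (Cons a x')
  obtain c y' where y: "y = c#y'" using Cons.prems by (cases y) auto
  have l: "length x' = length y'" using Cons.prems y by simp
  show ?case
  proof (cases "a = c")
    case False
    then show ?thesis using T_diff_card[OF b False l] y by simp
  next
    case True
    have ne: "x' \<noteq> y'" using Cons.prems y True by simp
    show ?thesis
    proof (induction s)
      case 0
      have "card (S b (Suc 0) (a#x') \<inter> S b (Suc 0) (a#y')) =
         card (S b (Suc 0) x' \<inter> S b (Suc 0) y') + 2^(b-1) * card (S b 0 (a#x') \<inter> S b 0 (a#y'))"
        by (rule T_same[OF b])
      also have "S b 0 (a#x') \<inter> S b 0 (a#y') = {}" using ne by (simp add: S0)
      also have "card (S b (Suc 0) x' \<inter> S b (Suc 0) y') \<le> 2^b * F b (length x') 0"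
        using Cons.IH[OF l ne] .
      finally show ?case using y True by (simp add: F_n0)
    next
      case (Suc s')
      have "card (S b (Suc (Suc s')) (a#x') \<inter> S b (Suc (Suc s')) (a#y')) =
         card (S b (Suc (Suc s')) x' \<inter> S b (Suc (Suc s')) y') + 2^(b-1) * card (S b (Suc s') (a#x') \<inter> S b (Suc s') (a#y'))"
        by (rule T_same[OF b])
      also have "\<dots> \<le> 2^b * F b (length x') (Suc s') + 2^(b-1) * (2^b * F b (Suc (length x')) s')"
        using Cons.IH[OF l ne] Suc.IH y True by (intro add_mono mult_le_mono2) simp_all
      also have "\<dots> = 2^b * F b (Suc (length x')) (Suc s')"
        using F_rec[OF b, of "length x'" s'] by (simp add: algebra_simps)
      finally show ?case using y True by simp
    qed
  qed
qed



lemma I_eq_S: "I_set t b x = S b t x" unfolding I_set_Q S_def by simp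

theorem mainTheorem4:
  fixes n t b :: nat
  assumes "n \<ge> 1" and "t \<ge> 1" and "b \<ge> 1"
  shows "N2plus b n t = 2 ^ b * I2 b n (t - 1)
       \<and> 2 ^ b * I2 b n (t - 1) = 2 ^ (t * (b - 1) + 1) * (\<Sum>i = 0..t - 1. (n + t - 1) choose i)"
proof -
  have b: "b \<ge> 1" using assms by simp
  obtain s where ts: "t = Suc s" using assms by (cases t) auto
  obtain m where nm: "n = Suc m" using assms by (cases n) auto
  have I2v: "I2 b n s = F b n s"
  proof -
    have "{card (I_set s b x) | x. length x = n} = {F b n s}"
    proof
      show "{card (I_set s b x) | x. length x = n} \<subseteq> {F b n s}"
        using card_S[OF b] by (auto simp: I_eq_S)
      show "{F b n s} \<subseteq> {card (I_set s b x) | x. length x = n}"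
        using card_S[OF b, of s "replicate n True"] by (auto simp: I_eq_S intro!: exI[of _ "replicate n True"])
    qed
    then show ?thesis unfolding I2_def by simp
  qed
  have Nv: "N2plus b n t = 2^b * F b n s"
  proof -
    let ?M = "{card (I_set t b x \<inter> I_set t b y) | x y. length x = n \<and> length y = n \<and> x \<noteq> y}"
    have ub: "\<forall>k\<in>?M. k \<le> 2^b * F b n s"
    proof
      fix k assume "k \<in> ?M"
      then obtain x y where "k = card (I_set t b x \<inter> I_set t b y)" "length x = n" "length y = n" "x \<noteq> y"
        by blast
      then show "k \<le> 2^b * F b n s" using T_bound[OF b, of x y s] by (simp add: I_eq_S ts)
    qed
    have fin: "finite ?M"
      by (rule finite_subset[of _ "{..2^b * F b n s}"]) (use ub in auto)
    have mem: "2^b * F b n s \<in> ?M"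
    proof -
      let ?w = "replicate m True"
      have "card (I_set t b (True#?w) \<inter> I_set t b (False#?w)) = 2^b * F b n s"
        using T_diff_eq[OF b, of True False s ?w] by (simp add: I_eq_S ts nm)
      moreover have "length (True#?w) = n" "length (False#?w) = n" using nm by auto
      ultimately show ?thesis by (smt (verit) CollectI list.inject)
    qed
    show ?thesis unfolding N2plus_def by (rule Max_eqI[OF fin]) (use ub mem in auto)
  qed
  have last: "2^b * F b n s = 2 ^ (t * (b - 1) + 1) * (\<Sum>i = 0..t - 1. (n + t - 1) choose i)"
  proof -
    have "n + t - 1 = n + s" using ts by simp
    moreover have "{0..t-1} = {..s}" using ts by auto
    moreover have "t * (b - 1) + 1 = b + s*(b-1)" using ts b by (cases b) auto
    ultimately show ?thesis unfolding F_def by (simp add: power_add)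
  qed
  show ?thesis using Nv I2v last ts by simp
qed


end
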